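(* Let $t\ge 3$ and let $\mathcal{H}$ be an $n$-vertex $3$-uniform hypergraph that does not contain $K_{2,t}$ as a trace. Let $A$ be the set of edges of $\mathcal{H}$ containing at least one pair of vertices whose co-degree in $\mathcal{H}$ is $1$, and let $B=\mathcal{H}\setminus A$. For a vertex $x$, let $N_1(x)=\{z: \exists e\in B,\ \{x,z\}\subseteq e\}$ and $N_2(x)=\{z\notin N_1(x)\cup\{x\}: \exists e\in B,\ z\in e,\ e\cap N_1(x)\neq\emptyset\}$. Fix a vertex $v$, and for $u\in N_1(v)$ let $E_u=\{e\in B: e\cap N_1(v)=\{u\}\}$ and $V_u=\{w\in N_2(v): \exists e\in E_u,\ w\in e\}$. Then $$\sum_{u\in N_1(v)}|V_u|\le (t-1)(6t-2)\,n.$$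
   Context: A hypergraph $\mathcal{H}$ contains a graph $F$ (vertices $v_1,\dots,v_p$, edges $e_1,\dots,e_q$) as a trace if there exist distinct vertices $w_1,\dots,w_p\in V(\mathcal{H})$ and distinct edges $f_1,\dots,f_q\in E(\mathcal{H})$ such that whenever $e_i=v_\alpha v_\beta$, $f_i\cap\{w_1,\dots,w_p\}=\{w_\alpha,w_\beta\}$. The co-degree of a pair $\{x,y\}$ in $\mathcal{H}$ is the number of edges of $\mathcal{H}$ containing $\{x,y\}$. $\mathcal{H}\setminus A$ denotes the hypergraph on $V(\mathcal{H})$ with edge set $E(\mathcal{H})\setminus A$. *)

theory Defs
  imports Main
begin

definition uniform3 :: "'a set \<Rightarrow> 'a set set \<Rightarrow> bool" where
  "uniform3 V E \<longleftrightarrow> finite V \<and> (\<forall>e\<in>E. e \<subseteq> V \<and> card e = 3)"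

definition contains_trace ::
  "'a set \<Rightarrow> 'a set set \<Rightarrow> 'b set \<Rightarrow> 'b set set \<Rightarrow> bool" where
  "contains_trace V E VF EF \<longleftrightarrow>
     (\<exists>w f. inj_on w VF \<and> w ` VF \<subseteq> V \<and> inj_on f EF \<and> f ` EF \<subseteq> E \<and>
            (\<forall>e\<in>EF. f e \<inter> w ` VF = w ` e))"

definition K2t_vertices :: "nat \<Rightarrow> (nat + nat) set" where
  "K2t_vertices t = Inl ` {0..<2} \<union> Inr ` {0..<t}"

definition K2t_edges :: "nat \<Rightarrow> (nat + nat) set set" where
  "K2t_edges t = {{Inl i, Inr j} | i j. i < 2 \<and> j < t}"

definition codegree :: "'a set set \<Rightarrow> 'a \<Rightarrow> 'a \<Rightarrow> nat" where
  "codegree E x y = card {e\<in>E. {x, y} \<subseteq> e}"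

definition edgesA :: "'a set set \<Rightarrow> 'a set set" where
  "edgesA E = {e\<in>E. \<exists>x y. x \<noteq> y \<and> {x, y} \<subseteq> e \<and> codegree E x y = 1}"

definition edgesB :: "'a set set \<Rightarrow> 'a set set" where
  "edgesB E = E - edgesA E"

definition N1 :: "'a set set \<Rightarrow> 'a \<Rightarrow> 'a set" where
  "N1 E x = {z. z \<noteq> x \<and> (\<exists>e\<in>edgesB E. {x, z} \<subseteq> e)}"

definition N2 :: "'a set set \<Rightarrow> 'a \<Rightarrow> 'a set" where
  "N2 E x = {z. z \<notin> N1 E x \<union> {x} \<and> (\<exists>e\<in>edgesB E. z \<in> e \<and> e \<inter> N1 E x \<noteq> {})}"

definition Eu :: "'a set set \<Rightarrow> 'a \<Rightarrow> 'a \<Rightarrow> 'a set set" where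
  "Eu E v u = {e\<in>edgesB E. e \<inter> N1 E v = {u}}"

definition Vu :: "'a set set \<Rightarrow> 'a \<Rightarrow> 'a \<Rightarrow> 'a set" where
  "Vu E v u = {w\<in>N2 E v. \<exists>e\<in>Eu E v u. w \<in> e}"

end

theory Submission
  imports Defs
begin


lemma indep_exists:
  fixes S :: "'a set" and y :: "'a \<Rightarrow> 'a"
  assumes "finite S" "\<forall>u\<in>S. y u \<noteq> u" "\<forall>c. card {x\<in>S. y x = c} \<le> k" "j*(k+2) \<le> card S"
  shows "\<exists>T\<subseteq>S. card T = j \<and> (\<forall>u\<in>T. y u \<notin> T)"
  using assms
proof (induction j arbitrary: S)
  case 0
  then show ?case by (intro exI[of _ "{}"]) auto
next
  case (Suc j)
  then have "S \<noteq> {}" by auto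
  then obtain u where u: "u \<in> S" by blast
  define R where "R = {u, y u} \<union> {x\<in>S. y x = u}"
  define S' where "S' = S - R"
  have fR: "finite R" unfolding R_def using Suc.prems(1) by auto
  have "card R \<le> card {u, y u} + card {x\<in>S. y x = u}" unfolding R_def by (rule card_Un_le)
  also have "\<dots> \<le> 2 + k" using Suc.prems(3) card_insert_le[of "{y u}" u]
    by (intro add_mono) (auto simp: card_insert_if)
  finally have cR: "card R \<le> k + 2" by simp
  have "card S - card R \<le> card S'" unfolding S'_def by (rule diff_card_le_card_Diff[OF fR])
  with cR Suc.prems(4) have c': "j*(k+2) \<le> card S'" by simp
  have fS': "finite S'" using Suc.prems(1) S'_def by auto
  have "\<forall>c. card {x\<in>S'. y x = c} \<le> k"
  proof
    fix c
    have "card {x\<in>S'. y x = c} \<le> card {x\<in>S. y x = c}"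
      by (rule card_mono) (use Suc.prems(1) S'_def in auto)
    then show "card {x\<in>S'. y x = c} \<le> k" using Suc.prems(3) by (meson le_trans)
  qed
  moreover have "\<forall>u\<in>S'. y u \<noteq> u" using Suc.prems(2) S'_def by auto
  ultimately obtain T where T: "T \<subseteq> S'" "card T = j" "\<forall>u\<in>T. y u \<notin> T"
    using Suc.IH[OF fS'] c' by blast
  have uT: "u \<notin> T" using T(1) S'_def R_def by auto
  have fT: "finite T" using T(1) fS' finite_subset by blast
  show ?case
  proof (intro exI[of _ "insert u T"] conjI)
    show "insert u T \<subseteq> S" using T(1) u S'_def by auto
    show "card (insert u T) = Suc j" using uT fT T(2) by simp
    show "\<forall>x\<in>insert u T. y x \<notin> insert u T"
    proof
      fix x assume x: "x \<in> insert u T"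
      show "y x \<notin> insert u T"
      proof (cases "x = u")
        case True
        then show ?thesis using Suc.prems(2) u T(1) S'_def R_def by auto
      next
        case False
        then have "x \<in> T" using x by simp
        then show ?thesis using T S'_def R_def by auto
      qed
    qed
  qed
qed



lemma build_trace:
  fixes T :: "'a set" and t :: nat
  assumes fT: "finite T" and cT: "card T = t" and TV: "T \<subseteq> V" and vV: "v \<in> V" and wV: "w \<in> V"
    and vw: "v \<noteq> w" and vT: "v \<notin> T" and wT: "w \<notin> T"
    and hF1: "\<forall>u\<in>T. F1 u \<in> E \<and> F1 u \<inter> ({v,w} \<union> T) = {v,u}"
    and hF2: "\<forall>u\<in>T. F2 u \<in> E \<and> F2 u \<inter> ({v,w} \<union> T) = {w,u}"
  shows "contains_trace V E (K2t_vertices t) (K2t_edges t)"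
proof -
  obtain g where g: "bij_betw g {0..<t} T" using ex_bij_betw_nat_finite[OF fT] cT by blast
  have gi: "inj_on g {0..<t}" and gT: "g ` {0..<t} = T" using g by (auto simp: bij_betw_def)
  define G :: "nat \<Rightarrow> 'a \<Rightarrow> 'a set" where "G i u = (if i = 0 then F1 u else F2 u)" for i u
  define wf :: "nat + nat \<Rightarrow> 'a" where "wf = case_sum (\<lambda>i. if i = 0 then v else w) g"
  define f :: "(nat + nat) set \<Rightarrow> 'a set" where
    "f e = G (THE i. Inl i \<in> e) (g (THE j. Inr j \<in> e))" for e
  have fe: "f {Inl i, Inr j} = G i (g j)" for i j
  proof -
    have "(THE i'. Inl i' \<in> {Inl i, Inr j}) = i" by (rule the_equality) auto
    moreover have "(THE j'. Inr j' \<in> {Inl i, Inr j}) = j" by (rule the_equality) auto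
    ultimately show ?thesis unfolding f_def by simp
  qed
  have two: "{0..<2::nat} = {0,1}" by auto
  have img: "wf ` K2t_vertices t = {v, w} \<union> T"
    unfolding K2t_vertices_def wf_def using gT by (auto simp: image_Un image_image two)
  have img2: "wf ` {Inl i, Inr j} = {if i = 0 then v else w, g j}" for i j
    unfolding wf_def by simp
  show ?thesis
    unfolding contains_trace_def
  proof (intro exI[of _ wf] exI[of _ f] conjI)
    show "inj_on wf (K2t_vertices t)"
    proof (rule inj_onI)
      fix a b assume a: "a \<in> K2t_vertices t" and b: "b \<in> K2t_vertices t" and ab: "wf a = wf b"
      show "a = b"
      proof (cases a)
        case (Inl i)
        then have i: "i < 2" using a unfolding K2t_vertices_def by auto
        show ?thesis
        proof (cases b)
          case (Inl i')
          then have "i' < 2" using b unfolding K2t_vertices_def by auto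
          then show ?thesis using i ab Inl \<open>a = Inl i\<close> vw unfolding wf_def by (auto split: if_splits)
        next
          case (Inr j)
          then have "g j \<in> T" using b gT unfolding K2t_vertices_def by auto
          then show ?thesis using ab Inr \<open>a = Inl i\<close> vT wT unfolding wf_def by (auto split: if_splits)
        qed
      next
        case (Inr j)
        then have j: "j < t" "g j \<in> T" using a gT unfolding K2t_vertices_def by auto
        show ?thesis
        proof (cases b)
          case (Inl i')
          then show ?thesis using ab Inr j vT wT unfolding wf_def by (auto split: if_splits)
        next
          case (Inr j')
          then have "j' < t" using b unfolding K2t_vertices_def by auto
          then have "j = j'" using gi j ab Inr \<open>a = Inr j\<close> unfolding wf_def inj_on_def by auto
          then show ?thesis using Inr \<open>a = Inr j\<close> by simp
        qed
      qed
    qed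
    show "wf ` K2t_vertices t \<subseteq> V" using img TV vV wV by auto
    show "inj_on f (K2t_edges t)"
    proof (rule inj_onI)
      fix a b assume a: "a \<in> K2t_edges t" and b: "b \<in> K2t_edges t" and ab: "f a = f b"
      from a obtain i j where a': "a = {Inl i, Inr j}" "i < 2" "j < t" unfolding K2t_edges_def by blast
      from b obtain i' j' where b': "b = {Inl i', Inr j'}" "i' < 2" "j' < t" unfolding K2t_edges_def by blast
      have gj: "g j \<in> T" "g j' \<in> T" using gT a' b' by auto
      have "G i (g j) = G i' (g j')" using ab a' b' fe by simp
      then have "G i (g j) \<inter> ({v,w} \<union> T) = G i' (g j') \<inter> ({v,w} \<union> T)" by simp
      moreover have "G k (g l) \<inter> ({v,w} \<union> T) = {if k = 0 then v else w, g l}" if "g l \<in> T" for k l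
        using hF1 hF2 that unfolding G_def by auto
      ultimately have eq: "{if i = 0 then v else w, g j} = {if i' = 0 then v else w, g j'}" using gj by simp
      have "g j = g j'" using eq gj vT wT by (auto simp: doubleton_eq_iff split: if_splits)
      then have "j = j'" using gi a' b' by (auto simp: inj_on_def)
      moreover have "i = i'" using eq gj vT wT vw a' b' \<open>g j = g j'\<close>
        by (auto simp: doubleton_eq_iff split: if_splits)
      ultimately show "a = b" using a' b' by simp
    qed
    show "f ` K2t_edges t \<subseteq> E"
    proof
      fix x assume "x \<in> f ` K2t_edges t"
      then obtain i j where x: "x = f {Inl i, Inr j}" "j < t" unfolding K2t_edges_def by blast
      have "g j \<in> T" using gT x by auto
      then show "x \<in> E" using hF1 hF2 unfolding x fe G_def by auto
    qed
    show "\<forall>e\<in>K2t_edges t. f e \<inter> wf ` K2t_vertices t = wf ` e"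
    proof
      fix e assume "e \<in> K2t_edges t"
      then obtain i j where e: "e = {Inl i, Inr j}" "i < 2" "j < t" unfolding K2t_edges_def by blast
      have "g j \<in> T" using gT e by auto
      then show "f e \<inter> wf ` K2t_vertices t = wf ` e"
        unfolding img e img2 fe G_def using hF1 hF2 by auto
    qed
  qed
qed


lemma count_swap:
  assumes "finite A" "finite B" "\<forall>u\<in>A. R u \<subseteq> B"
  shows "(\<Sum>u\<in>A. card (R u)) = (\<Sum>w\<in>B. card {u\<in>A. w \<in> R u})"
proof -
  have "(\<Sum>u\<in>A. card (R u)) = (\<Sum>u\<in>A. \<Sum>w\<in>B. if w \<in> R u then 1 else 0)"
  proof (rule sum.cong[OF refl])
    fix u assume "u \<in> A"
    then have s: "B \<inter> R u = R u" using assms(3) by auto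
    have "(\<Sum>w\<in>B. if w \<in> R u then 1 else 0) = card (B \<inter> {w. w \<in> R u})"
      using assms(2) by (simp only: sum.If_cases) simp
    then show "card (R u) = (\<Sum>w\<in>B. if w \<in> R u then 1 else 0)" using s by simp
  qed
  also have "\<dots> = (\<Sum>w\<in>B. \<Sum>u\<in>A. if w \<in> R u then 1 else 0)" by (rule sum.swap)
  also have "\<dots> = (\<Sum>w\<in>B. card {u\<in>A. w \<in> R u})"
  proof (rule sum.cong[OF refl])
    fix w
    have "(\<Sum>u\<in>A. if w \<in> R u then 1 else 0) = card (A \<inter> {u. w \<in> R u})"
      using assms(1) by (simp only: sum.If_cases) simp
    also have "A \<inter> {u. w \<in> R u} = {u\<in>A. w \<in> R u}" by blast
    finally show "(\<Sum>u\<in>A. if w \<in> R u then 1 else 0) = card {u\<in>A. w \<in> R u}" .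
  qed
  finally show ?thesis .
qed

lemma card3:
  assumes "card e = 3" "a \<in> e" "b \<in> e" "a \<noteq> b"
  shows "\<exists>c. e = {a,b,c} \<and> c \<noteq> a \<and> c \<noteq> b"
proof -
  obtain x y z where e: "e = {x,y,z}" "x \<noteq> y" "y \<noteq> z" "x \<noteq> z" using assms(1) unfolding card_3_iff by blast
  show ?thesis using assms(2-4) unfolding e(1) using e(2-4) by auto
qed

lemma codeg2:
  assumes finE: "finite E" and EV: "\<forall>e\<in>E. e \<subseteq> V \<and> card e = 3"
    and u: "u \<in> N1 E v" and wv: "w \<noteq> v" and wu: "w \<noteq> u"
  shows "\<exists>z. {v,u,z} \<in> E \<and> z \<noteq> w \<and> z \<noteq> u \<and> z \<noteq> v"
proof -
  from u obtain e where uv: "u \<noteq> v" and e: "e \<in> edgesB E" "{v,u} \<subseteq> e" unfolding N1_def by auto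
  have eE: "e \<in> E" and notA: "e \<notin> edgesA E" using e unfolding edgesB_def by auto
  have "codegree E v u \<noteq> 1"
  proof
    assume "codegree E v u = 1"
    then have "e \<in> edgesA E" unfolding edgesA_def using eE e(2) uv by (intro CollectI conjI exI[of _ v] exI[of _ u]) auto
    then show False using notA by contradiction
  qed
  moreover have "codegree E v u \<noteq> 0"
  proof -
    have "finite {e\<in>E. {v,u} \<subseteq> e}" using finE by simp
    moreover have "e \<in> {e\<in>E. {v,u} \<subseteq> e}" using eE e(2) by simp
    ultimately show ?thesis unfolding codegree_def by (simp add: card_eq_0_iff) blast
  qed
  ultimately have "2 \<le> card {e\<in>E. {v,u} \<subseteq> e}" unfolding codegree_def by linarith
  then obtain P where P: "P \<subseteq> {e\<in>E. {v,u} \<subseteq> e}" "card P = 2" by (rule obtain_subset_with_card_n)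
  then obtain e1 e2 where P2: "P = {e1,e2}" "e1 \<noteq> e2" unfolding card_2_iff by blast
  have e1: "e1 \<in> E" "v \<in> e1" "u \<in> e1" and e2: "e2 \<in> E" "v \<in> e2" "u \<in> e2" using P P2 by auto
  obtain c1 where c1: "e1 = {v,u,c1}" "c1 \<noteq> v" "c1 \<noteq> u" using card3[of e1 v u] e1 EV uv by blast
  obtain c2 where c2: "e2 = {v,u,c2}" "c2 \<noteq> v" "c2 \<noteq> u" using card3[of e2 v u] e2 EV uv by blast
  have "c1 \<noteq> w \<or> c2 \<noteq> w" using P2(2) c1(1) c2(1) by blast
  then show ?thesis
  proof
    assume "c1 \<noteq> w" then show ?thesis using c1 e1 by blast
  next
    assume "c2 \<noteq> w" then show ?thesis using c2 e2 by blast
  qed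
qed


lemma arith_bound: "(t::nat) \<ge> 3 \<Longrightarrow> t * (t - 1 + 2) \<le> (t - 1) * (6 * t - 2)"
proof -
  assume "t \<ge> 3"
  then obtain s where "t = s + 3" by (metis add.commute le_add_diff_inverse)
  then show ?thesis by (simp add: algebra_simps)
qed

theorem mainTheorem8:
  fixes V :: "'a set" and E :: "'a set set" and t n :: nat and v :: 'a
  assumes "t \<ge> 3"
    and "uniform3 V E"
    and "card V = n"
    and "\<not> contains_trace V E (K2t_vertices t) (K2t_edges t)"
    and "v \<in> V"
  shows "(\<Sum>u\<in>N1 E v. card (Vu E v u)) \<le> (t - 1) * (6 * t - 2) * n"
proof -
  define K where "K = (t - 1) * (6 * t - 2)"
  have finV: "finite V" and EV: "\<forall>e\<in>E. e \<subseteq> V \<and> card e = 3" using assms(2) unfolding uniform3_def by auto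
  have finE: "finite E" using EV finV by (meson Pow_iff finite_Pow_iff finite_subset subsetI)
  have N1V: "N1 E v \<subseteq> V" unfolding N1_def edgesB_def using EV by auto
  have N2V: "N2 E v \<subseteq> V" unfolding N2_def edgesB_def using EV by auto
  have finN1: "finite (N1 E v)" using N1V finV finite_subset by blast
  have finN2: "finite (N2 E v)" using N2V finV finite_subset by blast
  have VuN2: "\<forall>u\<in>N1 E v. Vu E v u \<subseteq> N2 E v" unfolding Vu_def by auto
  have sw: "(\<Sum>u\<in>N1 E v. card (Vu E v u)) = (\<Sum>w\<in>N2 E v. card {u\<in>N1 E v. w \<in> Vu E v u})"
    by (rule count_swap[OF finN1 finN2 VuN2])
  have perw: "card {u\<in>N1 E v. w \<in> Vu E v u} \<le> K" if w: "w \<in> N2 E v" for w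
  proof (rule ccontr)
    define S where "S = {u\<in>N1 E v. w \<in> Vu E v u}"
    assume "\<not> card {u\<in>N1 E v. w \<in> Vu E v u} \<le> K"
    then have cS: "K < card S" unfolding S_def by simp
    have finS: "finite S" unfolding S_def using finN1 by auto
    have SN1: "S \<subseteq> N1 E v" unfolding S_def by auto
    have wN1: "w \<notin> N1 E v" and wv: "w \<noteq> v" using w unfolding N2_def by auto
    have vN1: "v \<notin> N1 E v" unfolding N1_def by auto
    have wV: "w \<in> V" using w N2V by auto
    have "\<forall>u\<in>S. \<exists>z. {v,u,z} \<in> E \<and> z \<noteq> w \<and> z \<noteq> u \<and> z \<noteq> v"
      using codeg2[OF finE EV] SN1 wv wN1 by blast
    then obtain y where y: "\<forall>u\<in>S. {v,u,y u} \<in> E \<and> y u \<noteq> w \<and> y u \<noteq> u \<and> y u \<noteq> v"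
      by metis
    define F2 where "F2 u = (SOME e. e \<in> Eu E v u \<and> w \<in> e)" for u
    have F2: "F2 u \<in> E \<and> F2 u \<inter> N1 E v = {u} \<and> w \<in> F2 u \<and> v \<notin> F2 u" if "u \<in> S" for u
    proof -
      have "\<exists>e. e \<in> Eu E v u \<and> w \<in> e" using that unfolding S_def Vu_def by auto
      then have h: "F2 u \<in> Eu E v u \<and> w \<in> F2 u" unfolding F2_def by (rule someI_ex)
      then have "F2 u \<in> edgesB E" "F2 u \<inter> N1 E v = {u}" unfolding Eu_def by auto
      moreover have "v \<notin> F2 u"
      proof
        assume "v \<in> F2 u"
        then have "w \<in> N1 E v" using h wv \<open>F2 u \<in> edgesB E\<close> unfolding N1_def by auto
        then show False using wN1 by simp
      qed
      ultimately show ?thesis using h unfolding edgesB_def by auto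
    qed
    have "\<exists>T\<subseteq>S. card T = t \<and> (\<forall>u\<in>T. y u \<notin> T)"
    proof (cases "\<exists>c. t \<le> card {x\<in>S. y x = c}")
      case True
      then obtain c where "t \<le> card {x\<in>S. y x = c}" by blast
      then obtain T where T: "T \<subseteq> {x\<in>S. y x = c}" "card T = t" by (meson obtain_subset_with_card_n)
      have "\<forall>u\<in>T. y u \<notin> T"
      proof
        fix u assume "u \<in> T"
        then have "y u = c" using T by auto
        moreover have "c \<notin> T" using T y by auto
        ultimately show "y u \<notin> T" by simp
      qed
      then show ?thesis using T by auto
    next
      case False
      have "\<forall>c. card {x\<in>S. y x = c} \<le> t - 1"
      proof
        fix c show "card {x\<in>S. y x = c} \<le> t - 1" using False by (metis Suc_pred' assms(1) less_Suc_eq_le not_le zero_less_iff_neq_zero le_zero_eq numeral_3_eq_3 Suc_leD)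
      qed
      moreover have "t * (t - 1 + 2) \<le> card S" using arith_bound[OF assms(1)] cS K_def by simp
      ultimately show ?thesis using indep_exists[OF finS, of y "t - 1" t] y by blast
    qed
    then obtain T where T: "T \<subseteq> S" "card T = t" "\<forall>u\<in>T. y u \<notin> T" by blast
    have "contains_trace V E (K2t_vertices t) (K2t_edges t)"
    proof (rule build_trace[where ?F1.0 = "\<lambda>u. {v,u,y u}" and ?F2.0 = F2 and w = w])
      show "finite T" using T finS finite_subset by blast
      show "card T = t" using T by simp
      show "T \<subseteq> V" using T SN1 N1V by auto
      show "v \<in> V" using assms(5) .
      show "w \<in> V" using wV .
      show "v \<noteq> w" using wv by simp
      show "v \<notin> T" using T SN1 vN1 by auto
      show "w \<notin> T" using T SN1 wN1 by auto
      show "\<forall>u\<in>T. {v,u,y u} \<in> E \<and> {v,u,y u} \<inter> ({v,w} \<union> T) = {v,u}"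
        using T y by auto
      show "\<forall>u\<in>T. F2 u \<in> E \<and> F2 u \<inter> ({v,w} \<union> T) = {w,u}"
      proof
        fix u assume u: "u \<in> T"
        then have uS: "u \<in> S" using T by auto
        have "F2 u \<inter> T \<subseteq> {u}" using F2[OF uS] T SN1 by auto
        moreover have "u \<in> F2 u" using F2[OF uS] by auto
        ultimately show "F2 u \<in> E \<and> F2 u \<inter> ({v,w} \<union> T) = {w,u}" using F2[OF uS] u by auto
      qed
    qed
    then show False using assms(4) by simp
  qed
  have "(\<Sum>w\<in>N2 E v. card {u\<in>N1 E v. w \<in> Vu E v u}) \<le> (\<Sum>w\<in>N2 E v. K)"
    by (rule sum_mono) (use perw in auto)
  also have "\<dots> = card (N2 E v) * K" by simp
  also have "\<dots> \<le> n * K" using card_mono[OF finV N2V] assms(3) by simp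
  finally show ?thesis using sw K_def by (simp add: mult.commute)
qed
end
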